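(* Let $p,q$ be nonnegative integers and let $x,z$ be arbitrary complex numbers. Then $$\binom{2x+z-q}{p}\binom{x}{q}=\sum_{i=0}^{p+q}\beta_i(p,q,z)\binom{2x+z}{i},$$ where $$\beta_i(p,q,z)=\frac{1}{2^{2q}}\sum_{b=\max(0,i-p)}^{q}2^b\binom{2q-b}{q}\sum_{a=0}^{b}\binom{p+b-q-z}{a}\binom{q+z}{b-a}\binom{a-q}{p+b-i}.$$
   Context: For complex $y$ and integer $n\ge0$, $\binom{y}{n}=y(y-1)\cdots(y-n+1)/n!$. *)

theory Defs
  imports Complex_Main
begin

definition beta :: "nat \<Rightarrow> nat \<Rightarrow> nat \<Rightarrow> complex \<Rightarrow> complex" where
  "beta i p q z = (1 / 2 ^ (2 * q)) *
     (\<Sum>b = max 0 (int i - int p) .. int q.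
        2 powi b * of_nat ((2 * q - nat b) choose q) *
        (\<Sum>a = 0 .. nat b.
           ((of_nat p + of_int b - of_nat q - z) gchoose a) *
           ((of_nat q + z) gchoose (nat b - a)) *
           ((of_nat a - of_nat q) gchoose nat (int p + b - int i))))"

end

theory Submission
  imports Defs "HOL-Computational_Algebra.Formal_Power_Series"
begin


lemma nat_rel1: "(s+1) * ((q+s+1) choose q) = (q+s+1) * ((q+s) choose (q::nat))"
  using binomial_absorb_comp[of "q+s+1" q] by simp

lemma nat_rel2: "(q+1) * ((q+s+2) choose (q+1)) = (q+s+2) * ((q+s+1) choose (q::nat))"
  using Suc_times_binomial[of q "q+s+1"] by simp

lemma c_rel1: "of_nat (Suc k) * (a gchoose Suc k) = (a - of_nat k) * (a gchoose k)"
  for a :: complex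
  using gbinomial_mult_1[of a k] by (simp add: algebra_simps)

lemma c_rel2: "of_nat (Suc k) * ((a+1) gchoose Suc k) = (a + 1) * (a gchoose k)"
  for a :: complex
  using Suc_times_gbinomial[of k a] by simp



definition Fq :: "complex \<Rightarrow> nat \<Rightarrow> nat \<Rightarrow> complex" where
  "Fq x q b = 2^b * of_nat ((2*q - b) choose q) * ((2*x - 2*of_nat q + of_nat b) gchoose b)"

definition Hq :: "complex \<Rightarrow> nat \<Rightarrow> nat \<Rightarrow> complex" where
  "Hq x q b = (case b of 0 \<Rightarrow> 0 | Suc j \<Rightarrow> - (2^(Suc j) * of_nat ((2*q - j) choose q) *
      (2*x - 4*of_nat q - 1 + 2*of_nat j) * ((2*x - 2*of_nat q - 1 + of_nat j) gchoose j)))"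

lemma nat_rels_c:
  fixes q s :: nat
  shows "(of_nat ((q+s+1) choose q) :: complex) = of_nat (q+s+1) * of_nat ((q+s) choose q) / of_nat (Suc s)"
    and "(of_nat ((q+s+2) choose (q+1)) :: complex) = of_nat (q+s+2) * of_nat ((q+s+1) choose q) / of_nat (Suc q)"
proof -
  have "(of_nat (Suc s) * of_nat ((q+s+1) choose q) :: complex) = of_nat (q+s+1) * of_nat ((q+s) choose q)"
    by (metis nat_rel1 of_nat_mult Suc_eq_plus1)
  moreover have "(of_nat (Suc s) :: complex) \<noteq> 0" by (rule of_nat_neq_0)
  ultimately show "(of_nat ((q+s+1) choose q) :: complex) = of_nat (q+s+1) * of_nat ((q+s) choose q) / of_nat (Suc s)"
    by (metis nonzero_mult_div_cancel_left)
  have "(of_nat (Suc q) * of_nat ((q+s+2) choose (q+1)) :: complex) = of_nat (q+s+2) * of_nat ((q+s+1) choose q)"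
    by (metis nat_rel2 of_nat_mult Suc_eq_plus1)
  moreover have "(of_nat (Suc q) :: complex) \<noteq> 0" by (rule of_nat_neq_0)
  ultimately show "(of_nat ((q+s+2) choose (q+1)) :: complex) = of_nat (q+s+2) * of_nat ((q+s+1) choose q) / of_nat (Suc q)"
    by (metis nonzero_mult_div_cancel_left)
qed

lemma c_rel1': "(a gchoose Suc k) = (a - of_nat k) * (a gchoose k) / of_nat (Suc k)"
  for a :: complex
  using c_rel1[of k a] of_nat_neq_0 by (metis nonzero_mult_div_cancel_left)

lemma c_rel2': "((a+1) gchoose Suc k) = (a + 1) * (a gchoose k) / of_nat (Suc k)"
  for a :: complex
  using c_rel2[of k a] of_nat_neq_0 by (metis nonzero_mult_div_cancel_left)

lemma term_gen:
  assumes "Suc (Suc m) \<le> q"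
  shows "of_nat (q+1) * Fq x (q+1) (Suc (Suc m)) - 4*(x - of_nat q) * Fq x q (Suc (Suc m))
     = Hq x q (Suc (Suc (Suc m))) - Hq x q (Suc (Suc m))"
proof -
  obtain s where q: "q = m + 2 + s" using assms le_Suc_ex by (metis add_2_eq_Suc')
  define u where "u = 2*x - 2*of_nat q"
  define A0 where "A0 = (of_nat ((q+s) choose q) :: complex)"
  define K where "K = (u + of_nat m) gchoose m"
  have n1: "2*(q+1) - Suc (Suc m) = q+s+2" "2*q - Suc (Suc m) = q+s" "2*q - Suc m = q+s+1"
    using q by auto
  have a1: "2*x - 2*of_nat (q+1) + of_nat (Suc (Suc m)) = u + of_nat m"
    "2*x - 2*of_nat q + of_nat (Suc (Suc m)) = (u + of_nat m + 1) + 1"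
    "2*x - 2*of_nat q - 1 + of_nat (Suc (Suc m)) = (u + of_nat m) + 1"
    "2*x - 2*of_nat q - 1 + of_nat (Suc m) = u + of_nat m"
    by (simp_all add: u_def algebra_simps)
  have e1: "(u + of_nat m) gchoose Suc m = u * K / of_nat (Suc m)"
    using c_rel1'[of "u + of_nat m" m] by (simp add: K_def)
  have e2: "(u + of_nat m) gchoose Suc (Suc m) = (u - 1) * ((u + of_nat m) gchoose Suc m) / of_nat (Suc (Suc m))"
    using c_rel1'[of "u + of_nat m" "Suc m"] by (simp add: algebra_simps)
  have e3: "((u + of_nat m) + 1) gchoose Suc m = (u + of_nat m + 1) * K / of_nat (Suc m)"
    using c_rel2'[of "u + of_nat m" m] by (simp add: K_def)
  have e4: "((u + of_nat m) + 1) gchoose Suc (Suc m) = (u + of_nat m + 1) * ((u + of_nat m) gchoose Suc m) / of_nat (Suc (Suc m))"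
    using c_rel2'[of "u + of_nat m" "Suc m"] by simp
  have e5: "((u + of_nat m + 1) + 1) gchoose Suc (Suc m) = (u + of_nat m + 2) * (((u + of_nat m) + 1) gchoose Suc m) / of_nat (Suc (Suc m))"
    using c_rel2'[of "u + of_nat m + 1" "Suc m"] by (simp add: algebra_simps)
  have N2: "(of_nat ((q+s+1) choose q) :: complex) = of_nat (q+s+1) * A0 / of_nat (Suc s)"
    using nat_rels_c(1)[of q s] by (simp add: A0_def)
  have N1: "(of_nat ((q+s+2) choose (q+1)) :: complex) = of_nat (q+s+2) * (of_nat (q+s+1) * A0 / of_nat (Suc s)) / of_nat (Suc q)"
    using nat_rels_c(2)[of q s] N2 by simp
  have nz: "(1 + of_nat m :: complex) \<noteq> 0" "(2 + of_nat m :: complex) \<noteq> 0" "(1 + of_nat s :: complex) \<noteq> 0"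
     "(3 + (of_nat m + of_nat s) :: complex) \<noteq> 0" "(2 + of_nat s * 2 :: complex) \<noteq> 0"
    using of_nat_neq_0[of m, where 'a=complex] of_nat_neq_0[of "Suc m", where 'a=complex]
      of_nat_neq_0[of s, where 'a=complex] of_nat_neq_0[of "m+s+2", where 'a=complex]
      of_nat_neq_0[of "s*2+1", where 'a=complex]
    by (simp_all add: algebra_simps)
  have xu: "x = (u + 2 * of_nat q)/2" by (simp add: u_def)
  show ?thesis
    unfolding Fq_def Hq_def nat.case
    apply (simp only: n1 a1)
    apply (simp only: e5 e4 e3 e2 e1 N1 N2 flip: A0_def)
    apply (simp only: xu q of_nat_Suc of_nat_add of_nat_numeral of_nat_1)
    apply (simp add: divide_simps nz)
    apply (simp add: algebra_simps)
    done
qed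



lemma term_0:
  shows "of_nat (q+1) * Fq x (q+1) 0 - 4*(x - of_nat q) * Fq x q 0 = Hq x q (Suc 0) - Hq x q 0"
proof -
  have n1: "2*(q+1) - 0 = q+q+2" "2*q - 0 = q+q" by auto
  have N2: "(of_nat ((q+q+1) choose q) :: complex) = of_nat (q+q+1) * of_nat ((q+q) choose q) / of_nat (Suc q)"
    using nat_rels_c(1)[of q q] by simp
  have N1: "(of_nat ((q+q+2) choose (q+1)) :: complex) = of_nat (q+q+2) * (of_nat (q+q+1) * of_nat ((q+q) choose q) / of_nat (Suc q)) / of_nat (Suc q)"
    using nat_rels_c(2)[of q q] N2 by simp
  have nz: "(1 + of_nat q :: complex) \<noteq> 0"
    using of_nat_neq_0[of q, where 'a=complex] by (simp add: algebra_simps)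
  show ?thesis
    unfolding Fq_def Hq_def nat.case
    apply (simp only: n1 N1)
    apply (simp add: divide_simps nz)
    apply (simp add: algebra_simps)
    done
qed

lemma term_1:
  assumes "1 \<le> q"
  shows "of_nat (q+1) * Fq x (q+1) (Suc 0) - 4*(x - of_nat q) * Fq x q (Suc 0) = Hq x q (Suc (Suc 0)) - Hq x q (Suc 0)"
proof -
  obtain s where q: "q = 1 + s" using assms le_Suc_ex by blast
  have n1: "2*(q+1) - Suc 0 = q+s+2" "2*q - Suc 0 = q+s" "2*q - 0 = q+s+1" using q by auto
  have N2: "(of_nat ((q+s+1) choose q) :: complex) = of_nat (q+s+1) * of_nat ((q+s) choose q) / of_nat (Suc s)"
    using nat_rels_c(1)[of q s] by simp
  have N1: "(of_nat ((q+s+2) choose (q+1)) :: complex) = of_nat (q+s+2) * (of_nat (q+s+1) * of_nat ((q+s) choose q) / of_nat (Suc s)) / of_nat (Suc q)"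
    using nat_rels_c(2)[of q s] N2 by simp
  have nz: "(1 + of_nat s :: complex) \<noteq> 0" "(2 + of_nat s :: complex) \<noteq> 0"
    using of_nat_neq_0[of s, where 'a=complex] of_nat_neq_0[of "Suc s", where 'a=complex]
    by (simp_all add: algebra_simps)
  show ?thesis
    unfolding Fq_def Hq_def nat.case
    apply (simp only: n1 N1 N2 gbinomial_Suc0 gbinomial_0)
    apply (simp add: q divide_simps nz)
    apply (simp add: algebra_simps)
    done
qed

lemma term_last:
  assumes "q = Suc m"
  shows "of_nat (q+1) * Fq x (q+1) (Suc (Suc m)) - 4*(x - of_nat q) * Fq x q (Suc (Suc m))
     = Hq x q (Suc (Suc (Suc m))) - Hq x q (Suc (Suc m))"
proof -
  define u where "u = 2*x - 2*of_nat q"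
  have n1: "2*(q+1) - Suc (Suc m) = q+1" "2*q - Suc (Suc m) = m" "2*q - Suc m = q"
    using assms by auto
  have c0: "m choose q = 0" using assms by simp
  have a1: "2*x - 2*of_nat (q+1) + of_nat (Suc (Suc m)) = u + of_nat m"
    "2*x - 2*of_nat q - 1 + of_nat (Suc m) = u + of_nat m"
    using assms by (simp_all add: u_def algebra_simps)
  have e2: "(u + of_nat m) gchoose Suc (Suc m) = (u - 1) * ((u + of_nat m) gchoose Suc m) / of_nat (Suc (Suc m))"
    using c_rel1'[of "u + of_nat m" "Suc m"] by (simp add: algebra_simps)
  have nz: "(2 + of_nat m :: complex) \<noteq> 0"
    using of_nat_neq_0[of "Suc m", where 'a=complex] by (simp_all add: algebra_simps)
  have xu: "x = (u + 2 * of_nat q)/2" by (simp add: u_def)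
  show ?thesis
    unfolding Fq_def Hq_def nat.case
    apply (simp only: n1 a1 c0 e2 binomial_n_n)
    apply (simp add: xu assms divide_simps nz)
    done
qed

lemma term_all:
  assumes "1 \<le> q" "b \<le> q + 1"
  shows "of_nat (q+1) * Fq x (q+1) b - 4*(x - of_nat q) * Fq x q b = Hq x q (Suc b) - Hq x q b"
proof (cases b)
  case 0 then show ?thesis using term_0 by simp
next
  case (Suc b')
  show ?thesis
  proof (cases b')
    case 0 then show ?thesis using term_1[OF assms(1)] Suc by simp
  next
    case (Suc m)
    show ?thesis
    proof (cases "b = q + 1")
      case True
      then have "q = Suc m" using \<open>b = Suc b'\<close> Suc by simp
      then show ?thesis using term_last[of q m x] \<open>b = Suc b'\<close> Suc by simp
    next
      case False
      then have "Suc (Suc m) \<le> q" using assms \<open>b = Suc b'\<close> Suc by simp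
      then show ?thesis using term_gen[of m q x] \<open>b = Suc b'\<close> Suc by simp
    qed
  qed
qed

definition Gq :: "complex \<Rightarrow> nat \<Rightarrow> complex" where
  "Gq x q = (\<Sum>b = 0..q. Fq x q b)"

lemma Gq_rec:
  assumes "1 \<le> q"
  shows "of_nat (q+1) * Gq x (q+1) = 4*(x - of_nat q) * Gq x q"
proof -
  have z: "Fq x q (q+1) = 0" using assms unfolding Fq_def by simp
  have hz: "Hq x q (Suc (q+1)) = 0" using assms unfolding Hq_def by simp
  have G': "Gq x q = (\<Sum>b = 0..q+1. Fq x q b)" unfolding Gq_def using z by simp
  have "of_nat (q+1) * Gq x (q+1) - 4*(x - of_nat q) * Gq x q
      = (\<Sum>b = 0..q+1. of_nat (q+1) * Fq x (q+1) b) - (\<Sum>b = 0..q+1. 4*(x - of_nat q) * Fq x q b)"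
    unfolding G' by (simp only: sum_distrib_left Gq_def)
  also have "\<dots> = (\<Sum>b = 0..q+1. of_nat (q+1) * Fq x (q+1) b - 4*(x - of_nat q) * Fq x q b)"
    by (rule sum_subtractf[symmetric])
  also have "\<dots> = (\<Sum>b = 0..q+1. Hq x q (Suc b) - Hq x q b)"
    using term_all[OF assms] by (intro sum.cong) auto
  also have "\<dots> = Hq x q (Suc (q+1)) - Hq x q 0"
    by (rule sum_Suc_diff) simp
  also have "\<dots> = 0" using hz by (simp add: Hq_def)
  finally show ?thesis by simp
qed

lemma Gq_closed: "Gq x q = 4^q * (x gchoose q)"
proof (induction q)
  case 0 then show ?case by (simp add: Gq_def Fq_def)
next
  case (Suc q)
  show ?case
  proof (cases "q = 0")
    case True
    then show ?thesis by (simp add: Gq_def Fq_def algebra_simps)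
  next
    case False
    then have "of_nat (q+1) * Gq x (q+1) = 4*(x - of_nat q) * Gq x q"
      using Gq_rec[of q x] by simp
    also have "\<dots> = 4^(q+1) * ((x - of_nat q) * (x gchoose q))" using Suc.IH by simp
    also have "(x - of_nat q) * (x gchoose q) = of_nat (Suc q) * (x gchoose Suc q)"
      using c_rel1[of q x] by simp
    finally have "of_nat (Suc q) * Gq x (Suc q) = of_nat (Suc q) * (4^(Suc q) * (x gchoose Suc q))"
      by (simp add: mult.assoc)
    moreover have "(of_nat (Suc q) :: complex) \<noteq> 0" by (rule of_nat_neq_0)
    ultimately show ?thesis by (metis mult_left_cancel)
  qed
qed



lemma gch_nat_zero: "a < i \<Longrightarrow> ((of_nat a :: complex) gchoose i) = 0"
  by (simp add: binomial_gbinomial[symmetric])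

lemma inner_sum:
  fixes c t :: complex
  assumes "i \<le> b"
  shows "(\<Sum>a=0..b. (c gchoose a) * ((of_nat a :: complex) gchoose i) * (t gchoose (b-a)))
       = (c gchoose i) * ((c - of_nat i + t) gchoose (b - i))"
proof -
  have split: "{0..b} = {0..<i} \<union> {i..b}" using assms by auto
  have z: "(\<Sum>a\<in>{0..<i}. (c gchoose a) * ((of_nat a :: complex) gchoose i) * (t gchoose (b-a))) = 0"
    by (intro sum.neutral) (auto simp: gch_nat_zero)
  have "(\<Sum>a=0..b. (c gchoose a) * ((of_nat a :: complex) gchoose i) * (t gchoose (b-a)))
      = (\<Sum>a=i..b. (c gchoose a) * ((of_nat a :: complex) gchoose i) * (t gchoose (b-a)))"
    unfolding split by (subst sum.union_disjoint) (auto simp: z)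
  also have "\<dots> = (\<Sum>k=0..b-i. (c gchoose (k+i)) * ((of_nat (k+i) :: complex) gchoose i) * (t gchoose (b-(k+i))))"
    using sum.shift_bounds_cl_nat_ivl[of "\<lambda>a. (c gchoose a) * ((of_nat a :: complex) gchoose i) * (t gchoose (b-a))" 0 i "b-i"]
      assms by simp
  also have "\<dots> = (\<Sum>k=0..b-i. (c gchoose i) * (((c - of_nat i) gchoose k) * (t gchoose (b-i-k))))"
  proof (intro sum.cong refl)
    fix k assume "k \<in> {0..b-i}"
    have "(c gchoose (k+i)) * ((of_nat (k+i) :: complex) gchoose i) = (c gchoose i) * ((c - of_nat i) gchoose (k+i-i))"
      by (rule gbinomial_trinomial_revision) simp
    moreover have "b - (k+i) = b - i - k" by simp
    ultimately show "(c gchoose (k+i)) * ((of_nat (k+i) :: complex) gchoose i) * (t gchoose (b-(k+i)))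
       = (c gchoose i) * (((c - of_nat i) gchoose k) * (t gchoose (b-i-k)))" by simp
  qed
  also have "\<dots> = (c gchoose i) * ((c - of_nat i + t) gchoose (b - i))"
    using gbinomial_Vandermonde[of "c - of_nat i" t "b-i"]
    by (simp only: sum_distrib_left[symmetric])
  finally show ?thesis .
qed

lemma inner_sum0:
  fixes c t :: complex
  assumes "b < i"
  shows "(\<Sum>a=0..b. (c gchoose a) * ((of_nat a :: complex) gchoose i) * (t gchoose (b-a))) = 0"
  using assms by (intro sum.neutral) (auto simp: gch_nat_zero)

lemma K_id:
  fixes Y t :: complex and p b :: nat
  shows "(Y gchoose p) * ((Y - t + of_nat b) gchoose b)
     = (\<Sum>a=0..b. ((of_nat (p+b) - t) gchoose a) * (t gchoose (b-a)) * ((Y + of_nat a) gchoose (p+b)))"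
proof -
  define c where "c = of_nat (p+b) - t"
  have "(Y gchoose p) * ((Y - t + of_nat b) gchoose b) = (Y gchoose p) * ((c + (Y - of_nat p)) gchoose b)"
    by (simp add: c_def algebra_simps)
  also have "\<dots> = (\<Sum>j=0..b. (c gchoose j) * ((Y gchoose p) * ((Y - of_nat p) gchoose (b-j))))"
    by (simp add: gbinomial_Vandermonde[symmetric] sum_distrib_left mult_ac)
  also have "\<dots> = (\<Sum>j=0..b. (c gchoose j) * ((Y gchoose (p+b-j)) * ((of_nat (p+b-j) :: complex) gchoose (b-j))))"
  proof (intro sum.cong refl)
    fix j assume j: "j \<in> {0..b}"
    have "(Y gchoose (p+b-j)) * ((of_nat (p+b-j) :: complex) gchoose p) = (Y gchoose p) * ((Y - of_nat p) gchoose (p+b-j-p))"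
      by (rule gbinomial_trinomial_revision) (use j in simp)
    moreover have "((of_nat (p+b-j) :: complex) gchoose p) = ((of_nat (p+b-j) :: complex) gchoose (b-j))"
      using gbinomial_of_nat_symmetric[of p "p+b-j", where 'a=complex] j by simp
    moreover have "p+b-j-p = b-j" by simp
    ultimately show "(c gchoose j) * ((Y gchoose p) * ((Y - of_nat p) gchoose (b-j)))
       = (c gchoose j) * ((Y gchoose (p+b-j)) * ((of_nat (p+b-j) :: complex) gchoose (b-j)))" by simp
  qed
  finally have L: "(Y gchoose p) * ((Y - t + of_nat b) gchoose b)
     = (\<Sum>j=0..b. (c gchoose j) * ((Y gchoose (p+b-j)) * ((of_nat (p+b-j) :: complex) gchoose (b-j))))" .
  have "(\<Sum>a=0..b. (c gchoose a) * (t gchoose (b-a)) * ((Y + of_nat a) gchoose (p+b)))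
      = (\<Sum>a=0..b. \<Sum>i=0..p+b. (Y gchoose (p+b-i)) * ((c gchoose a) * ((of_nat a :: complex) gchoose i) * (t gchoose (b-a))))"
  proof (intro sum.cong refl)
    fix a assume "a \<in> {0..b}"
    have "(Y + of_nat a) gchoose (p+b) = (\<Sum>i=0..p+b. ((of_nat a :: complex) gchoose i) * (Y gchoose (p+b-i)))"
      using gbinomial_Vandermonde[of "of_nat a" Y "p+b"] by (simp add: add.commute)
    then show "(c gchoose a) * (t gchoose (b-a)) * ((Y + of_nat a) gchoose (p+b))
      = (\<Sum>i=0..p+b. (Y gchoose (p+b-i)) * ((c gchoose a) * ((of_nat a :: complex) gchoose i) * (t gchoose (b-a))))"
      by (simp add: sum_distrib_left mult_ac)
  qed
  also have "\<dots> = (\<Sum>i=0..p+b. (Y gchoose (p+b-i)) * (\<Sum>a=0..b. (c gchoose a) * ((of_nat a :: complex) gchoose i) * (t gchoose (b-a))))"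
    by (simp add: sum.swap[of _ "{0..b}"] sum_distrib_left)
  also have "\<dots> = (\<Sum>i=0..p+b. if i \<le> b then (Y gchoose (p+b-i)) * ((c gchoose i) * ((c - of_nat i + t) gchoose (b - i))) else 0)"
    by (intro sum.cong refl) (simp add: inner_sum inner_sum0)
  also have "\<dots> = (\<Sum>i=0..b. (Y gchoose (p+b-i)) * ((c gchoose i) * ((c - of_nat i + t) gchoose (b - i))))"
    by (simp add: sum.If_cases) (intro sum.cong; auto)
  also have "\<dots> = (\<Sum>j=0..b. (c gchoose j) * ((Y gchoose (p+b-j)) * ((of_nat (p+b-j) :: complex) gchoose (b-j))))"
  proof (intro sum.cong refl)
    fix j assume j: "j \<in> {0..b}"
    have "c - of_nat j + t = of_nat (p+b-j)" using j by (simp add: c_def of_nat_diff)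
    then show "(Y gchoose (p+b-j)) * ((c gchoose j) * ((c - of_nat j + t) gchoose (b - j)))
      = (c gchoose j) * ((Y gchoose (p+b-j)) * ((of_nat (p+b-j) :: complex) gchoose (b-j)))" by simp
  qed
  finally show ?thesis using L by (simp add: c_def)
qed



definition Wb :: "nat \<Rightarrow> nat \<Rightarrow> nat \<Rightarrow> complex \<Rightarrow> nat \<Rightarrow> nat \<Rightarrow> complex" where
  "Wb p q b z a i = ((of_nat p + of_nat b - of_nat q - z) gchoose a) * ((of_nat q + z) gchoose (b - a)) *
       ((of_nat a - of_nat q) gchoose (p + b - i))"

lemma int_sum_conv:
  fixes f :: "int \<Rightarrow> complex"
  shows "(\<Sum>b = max 0 (int i - int p) .. int q. f b) = (\<Sum>b = 0..q. if i \<le> p + b then f (int b) else 0)"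
proof -
  have m: "max 0 (int i - int p) = int (i - p)" by auto
  have "(\<Sum>b = max 0 (int i - int p) .. int q. f b) = (\<Sum>b \<in> int ` {i-p..q}. f b)"
    by (simp add: m image_int_atLeastAtMost)
  also have "\<dots> = (\<Sum>b \<in> {i-p..q}. f (int b))"
    by (subst sum.reindex) (auto simp: inj_on_def)
  also have "{i-p..q} = {b \<in> {0..q}. i \<le> p + b}" by auto
  also have "(\<Sum>b \<in> {b \<in> {0..q}. i \<le> p + b}. f (int b)) = (\<Sum>b = 0..q. if i \<le> p + b then f (int b) else 0)"
    by (rule sum.inter_filter) simp
  finally show ?thesis .
qed

lemma natd: "i \<le> p + b \<Longrightarrow> nat (int p + int b - int i) = p + b - i"
  by auto

lemma beta_conv:
  "beta i p q z = (1 / 2 ^ (2 * q)) *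
     (\<Sum>b = 0..q. if i \<le> p + b then 2^b * of_nat ((2*q - b) choose q) * (\<Sum>a=0..b. Wb p q b z a i) else 0)"
  unfolding beta_def
  apply (subst int_sum_conv)
  apply (intro arg_cong[where f="\<lambda>s. (1 / 2 ^ (2 * q)) * s"] sum.cong refl)
  apply (auto simp: Wb_def natd)
  done

lemma per_b:
  fixes x z :: complex and p q b :: nat
  shows "((2 * x + z - of_nat q) gchoose p) * ((2*x - 2*of_nat q + of_nat b) gchoose b)
     = (\<Sum>i=0..p+b. (\<Sum>a=0..b. Wb p q b z a i) * ((2 * x + z) gchoose i))"
proof -
  define Y where "Y = 2 * x + z - of_nat q"
  define t where "t = of_nat q + z"
  have e: "2*x - 2*of_nat q + of_nat b = Y - t + of_nat b" by (simp add: Y_def t_def)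
  have "(Y gchoose p) * ((Y - t + of_nat b) gchoose b)
     = (\<Sum>a=0..b. ((of_nat (p+b) - t) gchoose a) * (t gchoose (b-a)) * ((Y + of_nat a) gchoose (p+b)))"
    by (rule K_id)
  also have "\<dots> = (\<Sum>a=0..b. \<Sum>i=0..p+b. Wb p q b z a i * ((2 * x + z) gchoose i))"
  proof (intro sum.cong refl)
    fix a assume "a \<in> {0..b}"
    have "(Y + of_nat a) gchoose (p+b) = (\<Sum>i=0..p+b. ((2 * x + z) gchoose i) * ((of_nat a - of_nat q) gchoose (p+b-i)))"
      using gbinomial_Vandermonde[of "2*x+z" "of_nat a - of_nat q" "p+b"] by (simp add: Y_def algebra_simps)
    moreover have h2: "of_nat (p+b) - t = of_nat p + of_nat b - of_nat q - z" by (simp add: t_def)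
    ultimately show "((of_nat (p+b) - t) gchoose a) * (t gchoose (b-a)) * ((Y + of_nat a) gchoose (p+b))
        = (\<Sum>i=0..p+b. Wb p q b z a i * ((2 * x + z) gchoose i))"
      unfolding h2 unfolding Wb_def t_def by (simp add: sum_distrib_left mult_ac)
  qed
  also have "\<dots> = (\<Sum>i=0..p+b. (\<Sum>a=0..b. Wb p q b z a i) * ((2 * x + z) gchoose i))"
    by (simp add: sum.swap[of _ "{0..b}"] sum_distrib_right)
  finally show ?thesis by (simp add: e Y_def)
qed

theorem lemma2p5:
  fixes p q :: nat and x z :: complex
  shows "((2 * x + z - of_nat q) gchoose p) * (x gchoose q) =
         (\<Sum>i = 0 .. p + q. beta i p q z * ((2 * x + z) gchoose i))"
proof -
  define C where "C b = 2^b * (of_nat ((2*q - b) choose q) :: complex)" for b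
  have four: "(4::complex)^q = 2^(2*q)" by (simp add: power_mult)
  have xq: "x gchoose q = (1 / 2^(2*q)) * Gq x q"
    using Gq_closed[of x q] four by simp
  have "((2 * x + z - of_nat q) gchoose p) * (x gchoose q)
      = (1 / 2^(2*q)) * (\<Sum>b=0..q. C b * (((2 * x + z - of_nat q) gchoose p) * ((2*x - 2*of_nat q + of_nat b) gchoose b)))"
    unfolding xq Gq_def Fq_def C_def by (simp add: sum_distrib_left mult_ac)
  also have "\<dots> = (1 / 2^(2*q)) * (\<Sum>b=0..q. \<Sum>i=0..p+b. C b * (\<Sum>a=0..b. Wb p q b z a i) * ((2 * x + z) gchoose i))"
    apply (intro arg_cong[where f="\<lambda>s. (1 / 2 ^ (2 * q)) * s"] sum.cong refl)
    apply (subst per_b)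
    apply (subst sum_distrib_left)
    apply (intro sum.cong refl)
    apply (simp only: mult.assoc)
    done
  also have "\<dots> = (1 / 2^(2*q)) * (\<Sum>b=0..q. \<Sum>i=0..p+q. if i \<le> p + b then C b * (\<Sum>a=0..b. Wb p q b z a i) * ((2 * x + z) gchoose i) else 0)"
  proof -
    have "\<And>b. b \<in> {0..q} \<Longrightarrow> (\<Sum>i=0..p+b. C b * (\<Sum>a=0..b. Wb p q b z a i) * ((2 * x + z) gchoose i))
       = (\<Sum>i=0..p+q. if i \<le> p + b then C b * (\<Sum>a=0..b. Wb p q b z a i) * ((2 * x + z) gchoose i) else 0)"
    proof -
      fix b assume "b \<in> {0..q}"
      then have "{i \<in> {0..p+q}. i \<le> p + b} = {0..p+b}" by auto
      then show "(\<Sum>i=0..p+b. C b * (\<Sum>a=0..b. Wb p q b z a i) * ((2 * x + z) gchoose i))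
       = (\<Sum>i=0..p+q. if i \<le> p + b then C b * (\<Sum>a=0..b. Wb p q b z a i) * ((2 * x + z) gchoose i) else 0)"
        using sum.inter_filter[of "{0..p+q}" "\<lambda>i. C b * (\<Sum>a=0..b. Wb p q b z a i) * ((2 * x + z) gchoose i)" "\<lambda>i. i \<le> p + b"]
        by simp
    qed
    note hh = this
    show ?thesis
      apply (rule arg_cong[where f="\<lambda>s. (1 / 2 ^ (2 * q)) * s"])
      apply (rule sum.cong[OF refl])
      using hh by blast
  qed
  also have "\<dots> = (\<Sum>i = 0 .. p + q. beta i p q z * ((2 * x + z) gchoose i))"
    unfolding beta_conv C_def
    by (subst sum.swap) (simp add: sum_distrib_left sum_distrib_right if_distrib mult_ac cong: if_cong)
  finally show ?thesis .
qed

end
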